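(* Assume the standing assumptions and let $\bar u\in V$ be a local solution of \[ \min_{u\in V}\ F(u)+\frac\alpha2\|u\|_V^2+\beta\int_\Omega|u|^p\,dx , \] i.e. there is $\rho>0$ such that the objective at $\bar u$ is not larger than at any $u$ with $\|u-\bar u\|_V\le\rho$. Then there exists $\bar\lambda\in V^*$ such that \[ \alpha\langle\bar u,v\rangle_V+\beta\langle\bar\lambda,v\rangle_{V^*,V}=-F'(\bar u)v\quad\forall v\in V, \qquad \langle\bar\lambda,\bar u\rangle_{V^*,V}=p\int_\Omega|\bar u|^p\,dx . \]
   Context: Standing assumptions: $\Omega\subset\mathbb R^d$ bounded Lipschitz domain; $V$ real Hilbert space with inner product $\langle\cdot,\cdot\rangle_V$, $V\subset L^2(\Omega)$ with compact and dense embedding; $V^*$ dual with pairing $\langle\cdot,\cdot\rangle_{V^*,V}$. $F:V\to\mathbb R$ weakly lower semicontinuous, bounded below by an affine function ($F(u)\ge\langle g,u\rangle_{V^*,V}+c$ for some $g\in V^*$, $c\in\mathbb R$), and continuously Fréchet differentiable with derivative $F'(u)\in V^*$. $\alpha>0$, $\beta>0$, $p\in(0,1)$. *)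

theory Defs
  imports "HOL-Analysis.Analysis"
begin

definition L2_fun :: "'a::euclidean_space set \<Rightarrow> ('a \<Rightarrow> real) \<Rightarrow> bool" where
  "L2_fun \<Omega> f \<longleftrightarrow> set_borel_measurable lebesgue \<Omega> f \<and>
     set_integrable lebesgue \<Omega> (\<lambda>x. (f x)^2)"

definition L2_dist :: "'a::euclidean_space set \<Rightarrow> ('a \<Rightarrow> real) \<Rightarrow> ('a \<Rightarrow> real) \<Rightarrow> real" where
  "L2_dist \<Omega> f g = sqrt (LINT x:\<Omega>|lebesgue. (f x - g x)^2)"

text \<open>Bounded Lipschitz domain: nonempty bounded open connected set whose boundary is
  locally the (strict) epigraph of a Lipschitz function over a hyperplane.\<close>
definition bounded_lipschitz_domain :: "'a::euclidean_space set \<Rightarrow> bool" where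
  "bounded_lipschitz_domain \<Omega> \<longleftrightarrow> open \<Omega> \<and> connected \<Omega> \<and> \<Omega> \<noteq> {} \<and> bounded \<Omega> \<and>
     (\<forall>x0\<in>frontier \<Omega>. \<exists>r>0. \<exists>\<nu>::'a. norm \<nu> = 1 \<and>
        (\<exists>L (g::'a \<Rightarrow> real). L-lipschitz_on {y. y \<bullet> \<nu> = 0} g \<and>
           \<Omega> \<inter> ball x0 r = {x \<in> ball x0 r. g (x - (x \<bullet> \<nu>) *\<^sub>R \<nu>) < x \<bullet> \<nu>}))"

text \<open>J realises V as a subspace of L2(Omega) with compact and dense embedding
  (linearity and injectivity up to null sets, continuity, compactness, density).\<close>
definition compact_dense_embedding ::
  "'a::euclidean_space set \<Rightarrow> ('v::real_normed_vector \<Rightarrow> 'a \<Rightarrow> real) \<Rightarrow> bool" where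
  "compact_dense_embedding \<Omega> J \<longleftrightarrow>
     (\<forall>u. L2_fun \<Omega> (J u)) \<and>
     (\<forall>u w. AE x in lebesgue. x \<in> \<Omega> \<longrightarrow> J (u + w) x = J u x + J w x) \<and>
     (\<forall>c u. AE x in lebesgue. x \<in> \<Omega> \<longrightarrow> J (c *\<^sub>R u) x = c * J u x) \<and>
     (\<forall>u. (AE x in lebesgue. x \<in> \<Omega> \<longrightarrow> J u x = 0) \<longrightarrow> u = 0) \<and>
     (\<exists>C. \<forall>u. L2_dist \<Omega> (J u) (\<lambda>_. 0) \<le> C * norm u) \<and>
     (\<forall>us::nat \<Rightarrow> 'v. bounded (range us) \<longrightarrow>
        (\<exists>r f. strict_mono r \<and> L2_fun \<Omega> f \<and> (\<lambda>n. L2_dist \<Omega> (J (us (r n))) f) \<longlonglongrightarrow> 0)) \<and>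
     (\<forall>f \<epsilon>. L2_fun \<Omega> f \<and> \<epsilon> > 0 \<longrightarrow> (\<exists>u. L2_dist \<Omega> (J u) f < \<epsilon>))"

definition weakly_lsc :: "('v::real_normed_vector \<Rightarrow> real) \<Rightarrow> bool" where
  "weakly_lsc F \<longleftrightarrow> (\<forall>u us. (\<forall>l::'v \<Rightarrow> real. bounded_linear l \<longrightarrow> (\<lambda>n. l (us n)) \<longlonglongrightarrow> l u) \<longrightarrow>
      ereal (F u) \<le> liminf (\<lambda>n. ereal (F (us n))))"

end

theory Submission
  imports Defs
begin

lemma scale_int:
  fixes \<Omega> :: "'a::euclidean_space set" and J :: "'v::real_normed_vector \<Rightarrow> 'a \<Rightarrow> real"
  assumes emb: "compact_dense_embedding \<Omega> J" and t: "t > 0"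
  shows "(LINT x:\<Omega>|lebesgue. \<bar>J (t *\<^sub>R u) x\<bar> powr p) = t powr p * (LINT x:\<Omega>|lebesgue. \<bar>J u x\<bar> powr p)"
proof -
  have E: "(\<forall>u. L2_fun \<Omega> (J u)) \<and> (\<forall>c u. AE x in lebesgue. x \<in> \<Omega> \<longrightarrow> J (c *\<^sub>R u) x = c * J u x)"
  proof -
    note D = emb[unfolded compact_dense_embedding_def]
    have e1: "\<forall>u. L2_fun \<Omega> (J u)" using D[THEN conjunct1] .
    have e2: "\<forall>c u. AE x in lebesgue. x \<in> \<Omega> \<longrightarrow> J (c *\<^sub>R u) x = c * J u x"
      using D[THEN conjunct2, THEN conjunct2, THEN conjunct1] .
    note e1 e2
    thus ?thesis by (intro conjI)
  qed
  have L: "\<And>w. L2_fun \<Omega> (J w)" using E by simp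
  have ae: "AE x in lebesgue. x \<in> \<Omega> \<longrightarrow> J (t *\<^sub>R u) x = t * J u x"
    using E by simp
  have m: "(\<lambda>x. indicator \<Omega> x *\<^sub>R (\<bar>J w x\<bar> powr p)) \<in> borel_measurable lebesgue" for w
  proof -
    have "(\<lambda>x. indicator \<Omega> x *\<^sub>R J w x) \<in> borel_measurable lebesgue"
      using L[of w] unfolding L2_fun_def set_borel_measurable_def by blast
    hence M1: "(\<lambda>x. \<bar>indicator \<Omega> x *\<^sub>R J w x\<bar> powr p) \<in> borel_measurable lebesgue"
      by (rule measurable_abs_powr)
    have EQ1: "(\<lambda>x. \<bar>indicator \<Omega> x *\<^sub>R J w x\<bar> powr p) = (\<lambda>x. indicator \<Omega> x *\<^sub>R (\<bar>J w x\<bar> powr p))"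
    proof
      fix x show "\<bar>indicator \<Omega> x *\<^sub>R J w x\<bar> powr p = indicator \<Omega> x *\<^sub>R (\<bar>J w x\<bar> powr p)"
        by (cases "x \<in> \<Omega>") simp_all
    qed
    show ?thesis using M1 unfolding EQ1 .
  qed
  have m2: "(\<lambda>x. indicator \<Omega> x *\<^sub>R (t powr p * \<bar>J u x\<bar> powr p)) \<in> borel_measurable lebesgue"
  proof -
    have M2: "(\<lambda>x. t powr p * (indicator \<Omega> x *\<^sub>R (\<bar>J u x\<bar> powr p))) \<in> borel_measurable lebesgue"
      by (rule borel_measurable_times[OF borel_measurable_const m[of u]])
    have EQ2: "(\<lambda>x. t powr p * (indicator \<Omega> x *\<^sub>R (\<bar>J u x\<bar> powr p))) = (\<lambda>x. indicator \<Omega> x *\<^sub>R (t powr p * \<bar>J u x\<bar> powr p))"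
      by (rule ext) simp
    show ?thesis using M2 unfolding EQ2 .
  qed
  have pt: "(x \<in> \<Omega> \<longrightarrow> J (t *\<^sub>R u) x = t * J u x) \<longrightarrow>
      indicator \<Omega> x *\<^sub>R \<bar>J (t *\<^sub>R u) x\<bar> powr p = indicator \<Omega> x *\<^sub>R (t powr p * \<bar>J u x\<bar> powr p)" for x
  proof (cases "x \<in> \<Omega>")
    case True
    have "\<bar>t * J u x\<bar> powr p = t powr p * \<bar>J u x\<bar> powr p"
      using t by (simp add: abs_mult powr_mult)
    thus ?thesis using True by simp
  qed simp
  have "(LINT x:\<Omega>|lebesgue. \<bar>J (t *\<^sub>R u) x\<bar> powr p) = (LINT x:\<Omega>|lebesgue. t powr p * \<bar>J u x\<bar> powr p)"
    unfolding set_lebesgue_integral_def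
    by (rule integral_cong_AE[OF m m2 AE_mp[OF ae AE_I2[OF pt]]])
  also have "\<dots> = t powr p * (LINT x:\<Omega>|lebesgue. \<bar>J u x\<bar> powr p)"
    by (rule set_integral_mult_right)
  finally show ?thesis .
qed

theorem theorem5p6:
  fixes \<Omega> :: "'a::euclidean_space set"
    and J :: "'v::{real_inner, complete_space} \<Rightarrow> 'a \<Rightarrow> real"
    and F :: "'v \<Rightarrow> real"
    and F' :: "'v \<Rightarrow> ('v \<Rightarrow>\<^sub>L real)"
    and \<alpha> \<beta> p :: real
    and ubar :: 'v
  assumes dom: "bounded_lipschitz_domain \<Omega>"
    and emb: "compact_dense_embedding \<Omega> J"
    and F_wlsc: "weakly_lsc F"
    and F_below: "\<exists>g c. bounded_linear g \<and> (\<forall>u. F u \<ge> g u + c)"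
    and F_deriv: "\<forall>u. (F has_derivative blinfun_apply (F' u)) (at u)"
    and F'_cont: "continuous_on UNIV F'"
    and \<alpha>: "\<alpha> > 0" and \<beta>: "\<beta> > 0" and p: "0 < p" "p < 1"
    and loc: "\<exists>\<rho>>0. \<forall>u. norm (u - ubar) \<le> \<rho> \<longrightarrow>
        F ubar + \<alpha>/2 * (norm ubar)^2 + \<beta> * (LINT x:\<Omega>|lebesgue. \<bar>J ubar x\<bar> powr p)
        \<le> F u + \<alpha>/2 * (norm u)^2 + \<beta> * (LINT x:\<Omega>|lebesgue. \<bar>J u x\<bar> powr p)"
  shows "\<exists>lam::'v \<Rightarrow>\<^sub>L real.
           (\<forall>v. \<alpha> * inner ubar v + \<beta> * blinfun_apply lam v = - blinfun_apply (F' ubar) v) \<and>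
           blinfun_apply lam ubar = p * (LINT x:\<Omega>|lebesgue. \<bar>J ubar x\<bar> powr p)"
proof -
  define I where "I = (LINT x:\<Omega>|lebesgue. \<bar>J ubar x\<bar> powr p)"
  obtain \<rho> where \<rho>: "\<rho> > 0" and locmin: "\<And>u. norm (u - ubar) \<le> \<rho> \<Longrightarrow>
        F ubar + \<alpha>/2 * (norm ubar)^2 + \<beta> * I
        \<le> F u + \<alpha>/2 * (norm u)^2 + \<beta> * (LINT x:\<Omega>|lebesgue. \<bar>J u x\<bar> powr p)"
    using loc unfolding I_def by blast
  define g where "g t = F (t *\<^sub>R ubar) + \<alpha>/2 * t\<^sup>2 * (norm ubar)^2 + \<beta> * (t powr p * I)" for t
  have dF: "((\<lambda>t. F (t *\<^sub>R ubar)) has_real_derivative F' ubar ubar) (at 1)"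
  proof -
    have "((\<lambda>t. t *\<^sub>R ubar) has_derivative (\<lambda>h. h *\<^sub>R ubar)) (at 1)"
      by (auto intro!: derivative_eq_intros)
    from has_derivative_compose[OF this, of F "F' ubar"] F_deriv
    have "((\<lambda>t. F (t *\<^sub>R ubar)) has_derivative (\<lambda>h. F' ubar (h *\<^sub>R ubar))) (at 1)"
      by simp
    moreover have "(\<lambda>h. F' ubar (h *\<^sub>R ubar)) = (*) (F' ubar ubar)"
      by (simp add: blinfun.scaleR_right fun_eq_iff)
    ultimately show ?thesis unfolding has_field_derivative_def by simp
  qed
  have dg: "(g has_real_derivative (F' ubar ubar + \<alpha> * (norm ubar)^2 + \<beta> * (p * I))) (at 1)"
  proof -
    have a: "((\<lambda>t. \<alpha>/2 * t\<^sup>2 * (norm ubar)^2) has_real_derivative \<alpha> * (norm ubar)^2) (at 1)"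
      by (auto intro!: derivative_eq_intros)
    have b: "((\<lambda>t. \<beta> * (t powr p * I)) has_real_derivative \<beta> * (p * I)) (at 1)"
      by (auto intro!: derivative_eq_intros)
    show ?thesis unfolding g_def
      using DERIV_add[OF DERIV_add[OF dF a] b] by simp
  qed
  define d where "d = min (1/2) (\<rho> / (norm ubar + 1))"
  have d: "d > 0" using \<rho> by (simp add: d_def add_nonneg_pos)
  have "\<forall>y. \<bar>1 - y\<bar> < d \<longrightarrow> g 1 \<le> g y"
  proof (intro allI impI)
    fix y assume y: "\<bar>1 - y\<bar> < d"
    have "\<bar>1 - y\<bar> < 1/2" using y by (simp add: d_def)
    hence ypos: "y > 0" by linarith
    have "norm (y *\<^sub>R ubar - ubar) = \<bar>y - 1\<bar> * norm ubar"
      by (metis norm_scaleR scaleR_diff_left scaleR_one)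
    also have "\<dots> \<le> d * (norm ubar + 1)"
      using y by (intro mult_mono) (auto simp: abs_minus_commute)
    also have "\<dots> \<le> \<rho>"
    proof -
      have "d \<le> \<rho> / (norm ubar + 1)" unfolding d_def by simp
      hence "d * (norm ubar + 1) \<le> \<rho> / (norm ubar + 1) * (norm ubar + 1)"
        by (intro mult_right_mono) auto
      also have "\<dots> = \<rho>" using norm_ge_zero[of ubar] by (simp del: norm_ge_zero)
      finally show ?thesis .
    qed
    finally have "norm (y *\<^sub>R ubar - ubar) \<le> \<rho>" .
    from locmin[OF this] show "g 1 \<le> g y"
      unfolding g_def scale_int[OF emb ypos] I_def[symmetric]
      using ypos by (simp add: power_mult_distrib)
  qed
  from DERIV_local_min[OF dg d this]
  have eq: "F' ubar ubar + \<alpha> * (norm ubar)^2 + \<beta> * (p * I) = 0" .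
  define lam where "lam = Blinfun (\<lambda>v. (- F' ubar v - \<alpha> * inner ubar v) / \<beta>)"
  have bl: "bounded_linear (\<lambda>v. (- F' ubar v - \<alpha> * inner ubar v) / \<beta>)"
  proof -
    have "bounded_linear (\<lambda>v. - F' ubar v - \<alpha> * inner ubar v)"
      by (intro bounded_linear_sub bounded_linear_minus
        blinfun.bounded_linear_right bounded_linear_const_mult bounded_linear_inner_right)
    from bounded_linear_compose[OF bounded_linear_divide[of \<beta>] this] show ?thesis .
  qed
  have lamv: "lam v = (- F' ubar v - \<alpha> * inner ubar v) / \<beta>" for v
    unfolding lam_def bounded_linear_Blinfun_apply[OF bl] ..
  show ?thesis
  proof (intro exI[of _ lam] conjI allI)
    fix v show "\<alpha> * inner ubar v + \<beta> * lam v = - F' ubar v"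
      using \<beta> by (simp add: lamv)
  next
    show "lam ubar = p * (LINT x:\<Omega>|lebesgue. \<bar>J ubar x\<bar> powr p)"
      unfolding I_def[symmetric] lamv using eq \<beta>
      by (simp add: power2_norm_eq_inner field_simps)
  qed
qed

end
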